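(* Let $p$ be a positive integer. If problem (BM) has a spurious 2-critical point, then $C\in \mathbb{S}^n_{n-p}+\mathcal{L}$ (Minkowski sum), where $\mathbb{S}^n_{n-p}=\{X\in\mathbb{S}^n:\operatorname{rank}X\le n-p\}$ and $\mathcal{L}=\bigcup_I \operatorname{span}\{A_i : i\in I\}$, the union being over all subsets $I\subseteq[m]$ of constraints that can be simultaneously active, i.e. such that some $X\in\mathscr{X}$ satisfies $A_i\bullet X=b_i$ for all $i\in I$.
   Context: Let $\mathbb{S}^n$ be the space of real symmetric $n\times n$ matrices, with inner product $A\bullet B=\operatorname{trace}(A^TB)$ (also used for $A\in\mathbb{S}^n$, $B\in\mathbb{R}^{n\times n}$), and $\mathbb{S}^n_+$ the cone of positive semidefinite matrices. Let $m=m_1+m_2$, let $C,A_1,\dots,A_m\in\mathbb{S}^n$, $b\in\mathbb{R}^m$, $\mathcal{A}^*(\lambda)=\sum_i\lambda_iA_i$. Let $\mathscr{X}=\{X\in\mathbb{S}^n_+ : A_i\bullet X=b_i \ (i\le m_1),\ A_i\bullet X\ge b_i\ (m_1<i\le m)\}$; assume $\mathscr{X}$ is nonempty and that $\min_{X\in\mathscr{X}} C\bullet X$ is attained. Problem (BM) is $\min_{Y\in\mathbb{R}^{n\times p}} C\bullet YY^T$ subject to $YY^T\in\mathscr{X}$. For $Y$, let $I(Y)=\{i: A_i\bullet YY^T=b_i\}$ and $S(\lambda)=C-\mathcal{A}^*(\lambda)$. A point $Y$ is 1-critical for (BM) if $YY^T\in\mathscr{X}$ and there is $\lambda\in\mathbb{R}^{m_1}\times\mathbb{R}^{m_2}_+$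 with $\lambda_i=0$ for $i\notin I(Y)$ and $S(\lambda)Y=0$; it is 2-critical if moreover (for such a $\lambda$) $S(\lambda)\bullet UU^T\ge 0$ for all $U\in\mathbb{R}^{n\times p}$ with $A_i\bullet UY^T=0$ for all $i\in I(Y)$. A critical point is spurious if it is not a global minimizer of (BM). *)

theory Defs
  imports "HOL-Analysis.Analysis"
begin

text \<open>Matrices are rendered as real^'c^'r (r rows, c columns); n = CARD('n), p = CARD('p).
 Constraints are indexed 0..m-1 with m = m1 + m2; indices below m1 are equalities,
 indices m1..m-1 are inequalities.\<close>

definition symm :: "real^'n^'n \<Rightarrow> bool" where
  "symm A \<longleftrightarrow> transpose A = A"

definition psd :: "real^'n^'n \<Rightarrow> bool" where
  "psd X \<longleftrightarrow> symm X \<and> (\<forall>x. 0 \<le> x \<bullet> (X *v x))"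

definition frob :: "real^'c^'r \<Rightarrow> real^'c^'r \<Rightarrow> real" where
  "frob A B = trace (transpose A ** B)"

definition feasible ::
  "nat \<Rightarrow> nat \<Rightarrow> (nat \<Rightarrow> real^'n^'n) \<Rightarrow> (nat \<Rightarrow> real) \<Rightarrow> (real^'n^'n) set" where
  "feasible m1 m2 A b = {X. psd X \<and> (\<forall>i<m1. frob (A i) X = b i)
      \<and> (\<forall>i. m1 \<le> i \<and> i < m1 + m2 \<longrightarrow> frob (A i) X \<ge> b i)}"

definition active :: "nat \<Rightarrow> nat \<Rightarrow> (nat \<Rightarrow> real^'n^'n) \<Rightarrow> (nat \<Rightarrow> real) \<Rightarrow> real^'p^'n \<Rightarrow> nat set" where
  "active m1 m2 A b Y = {i. i < m1 + m2 \<and> frob (A i) (Y ** transpose Y) = b i}"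

definition Smat :: "nat \<Rightarrow> real^'n^'n \<Rightarrow> (nat \<Rightarrow> real^'n^'n) \<Rightarrow> (nat \<Rightarrow> real) \<Rightarrow> real^'n^'n" where
  "Smat m C A lam = C - (\<Sum>i<m. lam i *\<^sub>R A i)"

definition mult_ok :: "nat \<Rightarrow> nat \<Rightarrow> real^'n^'n \<Rightarrow> (nat \<Rightarrow> real^'n^'n) \<Rightarrow> (nat \<Rightarrow> real) \<Rightarrow> real^'p^'n \<Rightarrow> (nat \<Rightarrow> real) \<Rightarrow> bool" where
  "mult_ok m1 m2 C A b Y lam \<longleftrightarrow>
     (\<forall>i. m1 \<le> i \<and> i < m1 + m2 \<longrightarrow> 0 \<le> lam i)
   \<and> (\<forall>i<m1 + m2. i \<notin> active m1 m2 A b Y \<longrightarrow> lam i = 0)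
   \<and> Smat (m1 + m2) C A lam ** Y = 0"

definition one_critical :: "nat \<Rightarrow> nat \<Rightarrow> real^'n^'n \<Rightarrow> (nat \<Rightarrow> real^'n^'n) \<Rightarrow> (nat \<Rightarrow> real) \<Rightarrow> real^'p^'n \<Rightarrow> bool" where
  "one_critical m1 m2 C A b Y \<longleftrightarrow> Y ** transpose Y \<in> feasible m1 m2 A b
     \<and> (\<exists>lam. mult_ok m1 m2 C A b Y lam)"

definition two_critical :: "nat \<Rightarrow> nat \<Rightarrow> real^'n^'n \<Rightarrow> (nat \<Rightarrow> real^'n^'n) \<Rightarrow> (nat \<Rightarrow> real) \<Rightarrow> real^'p^'n \<Rightarrow> bool" where
  "two_critical m1 m2 C A b Y \<longleftrightarrow> Y ** transpose Y \<in> feasible m1 m2 A b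
     \<and> (\<exists>lam. mult_ok m1 m2 C A b Y lam
          \<and> (\<forall>U :: real^'p^'n. (\<forall>i\<in>active m1 m2 A b Y. frob (A i) (U ** transpose Y) = 0)
                \<longrightarrow> 0 \<le> frob (Smat (m1 + m2) C A lam) (U ** transpose U)))"

definition BM_global_min :: "nat \<Rightarrow> nat \<Rightarrow> real^'n^'n \<Rightarrow> (nat \<Rightarrow> real^'n^'n) \<Rightarrow> (nat \<Rightarrow> real) \<Rightarrow> real^'p^'n \<Rightarrow> bool" where
  "BM_global_min m1 m2 C A b Y \<longleftrightarrow> Y ** transpose Y \<in> feasible m1 m2 A b
     \<and> (\<forall>Y' :: real^'p^'n. Y' ** transpose Y' \<in> feasible m1 m2 A b
          \<longrightarrow> frob C (Y ** transpose Y) \<le> frob C (Y' ** transpose Y'))"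

definition spurious_two_critical :: "nat \<Rightarrow> nat \<Rightarrow> real^'n^'n \<Rightarrow> (nat \<Rightarrow> real^'n^'n) \<Rightarrow> (nat \<Rightarrow> real) \<Rightarrow> real^'p^'n \<Rightarrow> bool" where
  "spurious_two_critical m1 m2 C A b Y \<longleftrightarrow>
     two_critical m1 m2 C A b Y \<and> \<not> BM_global_min m1 m2 C A b Y"

definition simult_active :: "nat \<Rightarrow> nat \<Rightarrow> (nat \<Rightarrow> real^'n^'n) \<Rightarrow> (nat \<Rightarrow> real) \<Rightarrow> nat set \<Rightarrow> bool" where
  "simult_active m1 m2 A b I \<longleftrightarrow> I \<subseteq> {..<m1 + m2}
     \<and> (\<exists>X\<in>feasible m1 m2 A b. \<forall>i\<in>I. frob (A i) X = b i)"

definition Lset :: "nat \<Rightarrow> nat \<Rightarrow> (nat \<Rightarrow> real^'n^'n) \<Rightarrow> (nat \<Rightarrow> real) \<Rightarrow> (real^'n^'n) set" where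
  "Lset m1 m2 A b = (\<Union>I\<in>{I. simult_active m1 m2 A b I}. span (A ` I))"

definition low_rank_sym :: "nat \<Rightarrow> (real^'n^'n) set" where
  "low_rank_sym k = {X. symm X \<and> rank X \<le> k}"

end

theory Submission
  imports Defs
begin

lemma frob_inner: "frob (A::real^'c^'r) B = inner A B"
proof -
  have 1: "frob A B = (\<Sum>i\<in>UNIV. \<Sum>k\<in>UNIV. A$k$i * B$k$i)"
    by (simp add: frob_def trace_def matrix_matrix_mult_def transpose_def)
  have 2: "inner A B = (\<Sum>k\<in>UNIV. \<Sum>i\<in>UNIV. A$k$i * B$k$i)"
    by (simp add: inner_vec_def inner_real_def)
  show ?thesis unfolding 1 2 by (rule sum.swap)
qed

lemma symm_inner: assumes "symm X" shows "(X *v x) \<bullet> y = x \<bullet> (X *v y)"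
proof -
  have "X *v x = x v* X" using assms unfolding symm_def
    by (metis transpose_matrix_vector)
  then show ?thesis by (simp add: dot_lmul_matrix)
qed

definition outer :: "real^'a \<Rightarrow> real^'b \<Rightarrow> real^'b^'a" where
  "outer x y = (\<chi> i j. x$i * y$j)"

lemma outer_mv: "outer a b *v z = (b \<bullet> z) *\<^sub>R a"
  by (simp add: outer_def matrix_vector_mult_def inner_vec_def vec_eq_iff sum_distrib_left mult_ac)

lemma frob_outer: "frob S (outer w w) = w \<bullet> (S *v w)"
  by (simp add: frob_inner outer_def matrix_vector_mult_def inner_vec_def sum_distrib_left mult_ac)

lemma quad_expand: assumes "symm X"
  shows "(u + t *\<^sub>R v) \<bullet> (X *v (u + t *\<^sub>R v)) = u \<bullet> (X *v u) + 2*t*(v \<bullet> (X *v u)) + t^2 * (v \<bullet> (X *v v))"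
proof -
  have "u \<bullet> (X *v v) = v \<bullet> (X *v u)" using symm_inner[OF assms, of v u] by (simp add: inner_commute)
  then show ?thesis
    by (simp add: matrix_vector_right_distrib matrix_vector_mult_scaleR inner_add_left inner_add_right algebra_simps power2_eq_square)
qed

lemma psd_pos_dir:
  fixes X :: "real^'n^'n"
  assumes "psd X" "X *v x \<noteq> 0"
  shows "x \<bullet> (X *v x) > 0"
proof (rule ccontr)
  assume "\<not> ?thesis"
  moreover have "0 \<le> x \<bullet> (X *v x)" using assms unfolding psd_def by auto
  ultimately have c0: "x \<bullet> (X *v x) = 0" by simp
  define w where "w = X *v x"
  define a where "a = w \<bullet> w"
  define B where "B = w \<bullet> (X *v w)"
  have a: "a > 0" using assms unfolding a_def w_def by simp
  have B: "B \<ge> 0" using assms unfolding B_def psd_def by auto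
  define t where "t = - a / (B + 1)"
  have "0 \<le> (x + t *\<^sub>R w) \<bullet> (X *v (x + t *\<^sub>R w))" using assms unfolding psd_def by auto
  also have "\<dots> = 2*t*a + t^2 * B"
    using quad_expand[of X x t w] assms c0 unfolding psd_def a_def B_def w_def by simp
  also have "\<dots> = a^2 * (- B - 2) / (B+1)^2"
  proof -
    define d where "d = B + 1"
    have d: "d \<noteq> 0" using B unfolding d_def by simp
    have Bd: "B = d - 1" unfolding d_def by simp
    have "2*(-a/d)*a + (-a/d)^2 * (d - 1) = a^2 * (- (d - 1) - 2) / d^2"
      using d by (simp add: field_simps power2_eq_square)
    then show ?thesis unfolding t_def d_def by simp
  qed
  also have "\<dots> < 0" using a B by (simp add: divide_neg_pos mult_pos_neg)
  finally show False by simp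
qed

lemma subspace_null: "subspace {z. (X::real^'m^'n) *v z = 0}"
  unfolding subspace_def
  by (simp add: matrix_vector_right_distrib matrix_vector_mult_scaleR)

lemma psd_frob_nonneg:
  fixes S X :: "real^'n^'n"
  assumes S: "\<forall>x. 0 \<le> x \<bullet> (S *v x)"
  shows "psd X \<Longrightarrow> 0 \<le> frob S X"
proof (induct "CARD('n) - dim {z. X *v z = 0}" arbitrary: X rule: less_induct)
  case less
  show ?case
  proof (cases "X = 0")
    case True
    then show ?thesis by (simp add: frob_inner)
  next
    case False
    then obtain x where xX: "X *v x \<noteq> 0" by (metis matrix_eq matrix_vector_mult_0)
    have symX: "symm X" using less.prems unfolding psd_def by simp
    define w where "w = X *v x"
    define c where "c = x \<bullet> w"
    have c: "c > 0" using psd_pos_dir[OF less.prems xX] unfolding c_def w_def .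
    define X' where "X' = X - (1/c) *\<^sub>R outer w w"
    have X'mv: "X' *v z = X *v z - ((w \<bullet> z)/c) *\<^sub>R w" for z
      unfolding X'_def by (simp add: matrix_vector_mult_diff_rdistrib scaleR_matrix_vector_assoc[symmetric] outer_mv)
    have wz: "w \<bullet> z = x \<bullet> (X *v z)" for z unfolding w_def by (rule symm_inner[OF symX])
    have symX': "symm X'"
      using symX unfolding X'_def symm_def by (simp add: vec_eq_iff transpose_def outer_def)
    have psdX': "psd X'"
      unfolding psd_def
    proof (intro conjI allI symX')
      fix z
      define b where "b = w \<bullet> z"
      have "0 \<le> (z + (-(b/c)) *\<^sub>R x) \<bullet> (X *v (z + (-(b/c)) *\<^sub>R x))"
        using less.prems unfolding psd_def by blast
      also have "\<dots> = z \<bullet> (X *v z) + 2*(-(b/c))*(x \<bullet> (X *v z)) + (-(b/c))^2 * (x \<bullet> (X *v x))"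
        by (rule quad_expand[OF symX])
      also have "\<dots> = z \<bullet> (X *v z) - b^2/c"
        using c wz[of z] unfolding b_def c_def w_def by (simp add: field_simps power2_eq_square)
      also have "\<dots> = z \<bullet> (X' *v z)"
        unfolding X'mv b_def by (simp add: inner_diff_right power2_eq_square inner_commute)
      finally show "0 \<le> z \<bullet> (X' *v z)" .
    qed
    have sub: "{z. X *v z = 0} \<subseteq> {z. X' *v z = 0}"
      using wz by (auto simp: X'mv)
    have xin: "x \<in> {z. X' *v z = 0}" "x \<notin> {z. X *v z = 0}"
      using xX c unfolding X'mv c_def by (auto simp: inner_commute w_def)
    have "span {z. X *v z = 0} \<subset> span {z. X' *v z = 0}"
      using sub xin by (auto simp: span_eq_iff[THEN iffD2, OF subspace_null])
    then have "dim {z. X *v z = 0} < dim {z. X' *v z = 0}" by (rule dim_psubset)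
    moreover have "dim {z. X' *v z = 0} \<le> CARD('n)" by (rule dim_subset_UNIV_cart)
    ultimately have "CARD('n) - dim {z. X' *v z = 0} < CARD('n) - dim {z. X *v z = 0}" by linarith
    then have IH: "0 \<le> frob S X'" using less.hyps psdX' by blast
    have "X = X' + (1/c) *\<^sub>R outer w w" unfolding X'_def by simp
    then have "frob S X = frob S X' + (1/c) * frob S (outer w w)"
      by (simp add: frob_inner inner_add_right)
    moreover have "0 \<le> frob S (outer w w)" using S by (simp add: frob_outer)
    ultimately show ?thesis using IH c by simp
  qed
qed

lemma outer_mult_trY: "outer x z ** transpose Y = outer x (Y *v z)"
  by (simp add: vec_eq_iff outer_def matrix_matrix_mult_def matrix_vector_mult_def transpose_def
      sum_distrib_left mult_ac)

lemma outer_mult_tr: "outer x z ** transpose (outer y z) = (z \<bullet> z) *\<^sub>R outer x y"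
  by (simp add: vec_eq_iff outer_def matrix_matrix_mult_def transpose_def inner_vec_def
      sum_distrib_left sum_distrib_right mult_ac)

lemma outer_zero: "outer x 0 = 0"
  by (simp add: vec_eq_iff outer_def)

theorem theorem3:
  fixes m1 m2 :: nat
    and C :: "real^'n^'n"
    and A :: "nat \<Rightarrow> real^'n^'n"
    and b :: "nat \<Rightarrow> real"
    and Y :: "real^'p^'n"
  assumes "symm C"
    and "\<forall>i<m1 + m2. symm (A i)"
    and "feasible m1 m2 A b \<noteq> {}"
    and "\<exists>X\<in>feasible m1 m2 A b. \<forall>X'\<in>feasible m1 m2 A b. frob C X \<le> frob C X'"
    and "spurious_two_critical m1 m2 C A b Y"
  shows "C \<in> low_rank_sym (CARD('n) - CARD('p)) + Lset m1 m2 A b"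
proof -
  define m where "m = m1 + m2"
  have feasY: "Y ** transpose Y \<in> feasible m1 m2 A b"
    and notmin: "\<not> BM_global_min m1 m2 C A b Y"
    using assms(5) unfolding spurious_two_critical_def two_critical_def by auto
  obtain lam where ok: "mult_ok m1 m2 C A b Y lam"
    and so: "\<forall>U :: real^'p^'n. (\<forall>i\<in>active m1 m2 A b Y. frob (A i) (U ** transpose Y) = 0)
                \<longrightarrow> 0 \<le> frob (Smat (m1 + m2) C A lam) (U ** transpose U)"
    using assms(5) unfolding spurious_two_critical_def two_critical_def by blast
  define S where "S = Smat m C A lam"
  define L where "L = (\<Sum>i<m. lam i *\<^sub>R A i)"
  have CSL: "C = S + L" unfolding S_def L_def Smat_def by simp
  have lam_nonneg: "\<And>i. m1 \<le> i \<Longrightarrow> i < m \<Longrightarrow> 0 \<le> lam i"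
    and lam_act: "\<And>i. i < m \<Longrightarrow> i \<notin> active m1 m2 A b Y \<Longrightarrow> lam i = 0"
    and SY0: "S ** Y = 0"
    using ok unfolding mult_ok_def S_def m_def by auto
  have symS: "symm S"
  proof -
    have "transpose L = L"
      using assms(2) unfolding L_def m_def symm_def
      by (simp add: vec_eq_iff transpose_def sum_component)
    then show ?thesis using assms(1) unfolding symm_def S_def Smat_def L_def[symmetric]
      by (simp add: vec_eq_iff transpose_def)
  qed
  have frob_dec: "frob C X = frob S X + (\<Sum>i<m. lam i * frob (A i) X)" for X
    unfolding CSL L_def by (simp add: frob_inner inner_add_left inner_sum_left)
  have frobSY: "frob S (Y ** transpose Y) = 0"
  proof -
    have "transpose S ** (Y ** transpose Y) = (S ** Y) ** transpose Y"
      using symS by (simp add: symm_def matrix_mul_assoc)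
    then show ?thesis unfolding frob_def SY0 by (simp add: trace_def)
  qed
  have negdir: "\<exists>x. x \<bullet> (S *v x) < 0"
  proof (rule ccontr)
    assume "\<not> ?thesis"
    then have Spsd: "\<forall>x. 0 \<le> x \<bullet> (S *v x)" by (simp add: not_less)
    have "BM_global_min m1 m2 C A b Y"
      unfolding BM_global_min_def
    proof (intro conjI feasY allI impI)
      fix Y' :: "real^'p^'n"
      assume f': "Y' ** transpose Y' \<in> feasible m1 m2 A b"
      let ?X = "Y ** transpose Y" and ?X' = "Y' ** transpose Y'"
      have "(\<Sum>i<m. lam i * frob (A i) ?X) \<le> (\<Sum>i<m. lam i * frob (A i) ?X')"
      proof (rule sum_mono)
        fix i assume i: "i \<in> {..<m}"
        show "lam i * frob (A i) ?X \<le> lam i * frob (A i) ?X'"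
        proof (cases "i < m1")
          case True
          then show ?thesis using feasY f' unfolding feasible_def by simp
        next
          case False
          show ?thesis
          proof (cases "i \<in> active m1 m2 A b Y")
            case True
            then have "frob (A i) ?X = b i" unfolding active_def by simp
            moreover have "b i \<le> frob (A i) ?X'" using f' False i unfolding feasible_def m_def by auto
            moreover have "0 \<le> lam i" using lam_nonneg False i by simp
            ultimately show ?thesis by (simp add: mult_left_mono)
          next
            case False
            then show ?thesis using lam_act i by simp
          qed
        qed
      qed
      moreover have "0 \<le> frob S ?X'"
        using psd_frob_nonneg[OF Spsd] f' unfolding feasible_def by simp
      ultimately show "frob C ?X \<le> frob C ?X'"
        unfolding frob_dec using frobSY by simp
    qed
    then show False using notmin by simp
  qed
  then obtain x where x: "x \<bullet> (S *v x) < 0" by blast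
  have Yinj0: "z = 0" if "Y *v z = 0" for z
  proof (rule ccontr)
    assume z: "z \<noteq> 0"
    define U where "U = outer x z"
    have "U ** transpose Y = 0" unfolding U_def outer_mult_trY that outer_zero ..
    then have "0 \<le> frob S (U ** transpose U)"
      using so unfolding S_def m_def by (simp add: frob_inner)
    also have "frob S (U ** transpose U) = (z \<bullet> z) * (x \<bullet> (S *v x))"
      unfolding U_def outer_mult_tr by (simp add: frob_inner frob_outer[symmetric])
    also have "\<dots> < 0" using z x by (simp add: mult_pos_neg)
    finally show False by simp
  qed
  have "inj ((*v) Y)"
    by (rule injI) (metis Yinj0 eq_iff_diff_eq_0 matrix_vector_mult_diff_distrib)
  then have rY: "rank Y = CARD('p)" by (simp add: full_rank_injective)
  have orth: "u \<bullet> v = 0" if uv: "u \<in> range ((*v) S)" "v \<in> range ((*v) Y)" for u v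
  proof -
    obtain a c where "u = S *v a" "v = Y *v c" using uv by blast
    then show ?thesis using symm_inner[OF symS, of a "Y *v c"] SY0
      by (simp add: matrix_vector_mul_assoc)
  qed
  have "rank S + rank Y \<le> CARD('n)"
    using dim_orthogonal_sum[OF orth] dim_subset_UNIV_cart[of "range ((*v) S) \<union> range ((*v) Y)"]
    by (simp add: rank_dim_range)
  then have rS: "S \<in> low_rank_sym (CARD('n) - CARD('p))"
    using rY symS unfolding low_rank_sym_def by simp
  define I where "I = active m1 m2 A b Y"
  have simI: "simult_active m1 m2 A b I"
    unfolding simult_active_def I_def using feasY by (auto simp: active_def)
  have "L \<in> span (A ` I)"
    unfolding L_def
  proof (rule span_sum)
    fix i assume i: "i \<in> {..<m}"
    show "lam i *\<^sub>R A i \<in> span (A ` I)"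
    proof (cases "i \<in> I")
      case True
      then show ?thesis by (simp add: span_base span_scale)
    next
      case False
      then show ?thesis using lam_act i unfolding I_def by (simp add: span_zero)
    qed
  qed
  then have "L \<in> Lset m1 m2 A b" unfolding Lset_def using simI by blast
  then show ?thesis unfolding CSL using rS by (rule set_plus_intro[rotated])
qed

end
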